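(* Let $\phi$ be an instance of \textsc{Max (2,3)-SAT} with $n$ variables and let $T_\phi$ be the tournament instance constructed from $\phi$ as described in the context. If $\phi$ admits an assignment that satisfies at least $k$ clauses, then $T_\phi$ has a seeding whose tournament value is at least $k+n$.
   Context: Tournament model: players form a finite set of size $2^{n'}$ totally ordered by strength (stronger beats weaker). A seeding is a bijection $\sigma$ from players to $[2^{n'}]$. In round $r=1,\dots,n'$, for each block of seed positions $\{(k-1)2^r+1,\dots,k2^r\}$, the winner $a$ of its first half $\{(k-1)2^r+1,\dots,(k-1)2^r+2^{r-1}\}$ plays the winner $b$ of its second half (a single-position block is won by the player seeded there), the stronger one wins the block, and the game has value $v(a,b)$ (values do not depend on the round). The tournament value is the sum of values of all games played. \textsc{Max (2,3)-SAT} instance: a CNF formula $\phi$ with variables $x_1,\dots,x_n$ and clauses $c_1,\dots,c_m$, each clause having exactly two literals and each variable appearing in at most three clauses. Construction of $T_\phi$: let $n'$ be the smallest integer with $16n\le 2^{n'}$ and $p=2^{n'}-16n$. Players: for each $i\in[n]$, variable players $x_i,x_i^T,x_i^F$ and special players $\widehat d_i,d_i,\widetilde d_i$; for each clause $c$, a clause player $c$; dummy players $f_1,\dots,f_{10n+p-m}$. Strength order (strongest first): $\widehat d_1>d_1>\widetilde d_1>\widehat d_2>d_2>\widetilde d_2>\dots>\widehat d_n>d_n>\widetilde d_n>x_1>x_1^T>x_1^F>\dots>x_n>x_n^T>x_n^F>c_1>\dots>c_m>f_1>\dots>f_{10n+p-m}$. Round-oblivious symmetric game values ($v(a,b)=v(b,a)$):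 for each $i$, $v(x_i,x_i^T)=v(x_i,x_i^F)=1$; for each clause $c$ containing a literal of variable $x$, $v(c,x^T)=1$ if $x$ appears non-negated in $c$ and $v(c,x^F)=1$ if it appears negated; for each $i$, $v(d_i,\widehat d_i)=v(d_i,\widetilde d_i)=v(d_i,x_i)=0$; for each $i$ and every player $Y$ for which the pair value has not been set above, $v(d_i,Y)=v(x_i,Y)=-5$; all remaining pairs have value $0$. Thus the values lie in $\{0,1,-5\}$. *)

theory Defs
  imports Main
begin

text \<open>Seed positions are 1..2^N. s q is the player seeded at position q.
  winner stronger s r k is the winner of the round-r block with 0-based index k,
  i.e. of seed positions k*2^r+1 .. (k+1)*2^r.\<close>

fun winner :: "('a \<Rightarrow> 'a \<Rightarrow> bool) \<Rightarrow> (nat \<Rightarrow> 'a) \<Rightarrow> nat \<Rightarrow> nat \<Rightarrow> 'a" where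
  "winner stronger s 0 k = s (k + 1)"
| "winner stronger s (Suc r) k =
     (let a = winner stronger s r (2 * k); b = winner stronger s r (2 * k + 1)
      in if stronger a b then a else b)"

definition tournament_value ::
  "('a \<Rightarrow> 'a \<Rightarrow> int) \<Rightarrow> ('a \<Rightarrow> 'a \<Rightarrow> bool) \<Rightarrow> (nat \<Rightarrow> 'a) \<Rightarrow> nat \<Rightarrow> int" where
  "tournament_value v stronger s N =
     (\<Sum>r\<in>{1..N}. \<Sum>k<2 ^ (N - r).
        v (winner stronger s (r - 1) (2 * k)) (winner stronger s (r - 1) (2 * k + 1)))"

text \<open>A literal (i, True) is x_i, (i, False) is the negation of x_i. A clause is a pair of
  literals; a formula is a list of clauses c_1..c_m (clause c_j = cls ! (j-1)).\<close>
type_synonym literal = "nat \<times> bool"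
type_synonym clause = "literal \<times> literal"

definition clause_vars :: "clause \<Rightarrow> nat set" where
  "clause_vars c = {fst (fst c), fst (snd c)}"

definition max23sat_instance :: "nat \<Rightarrow> clause list \<Rightarrow> bool" where
  "max23sat_instance n cls \<longleftrightarrow>
     (\<forall>c\<in>set cls. fst c \<noteq> snd c \<and> clause_vars c \<subseteq> {1..n}) \<and>
     (\<forall>i\<in>{1..n}. card {j. j < length cls \<and> i \<in> clause_vars (cls ! j)} \<le> 3)"

definition lit_true :: "(nat \<Rightarrow> bool) \<Rightarrow> literal \<Rightarrow> bool" where
  "lit_true a l \<longleftrightarrow> a (fst l) = snd l"

definition clause_sat :: "(nat \<Rightarrow> bool) \<Rightarrow> clause \<Rightarrow> bool" where
  "clause_sat a c \<longleftrightarrow> lit_true a (fst c) \<or> lit_true a (snd c)"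

definition num_sat :: "clause list \<Rightarrow> (nat \<Rightarrow> bool) \<Rightarrow> nat" where
  "num_sat cls a = card {j. j < length cls \<and> clause_sat a (cls ! j)}"

datatype player =
    DHat nat | D nat | DTil nat
  | X nat | XT nat | XF nat
  | C nat
  | F nat

definition nprime :: "nat \<Rightarrow> nat" where
  "nprime n = (LEAST t. 16 * n \<le> 2 ^ t)"

definition pad :: "nat \<Rightarrow> nat" where
  "pad n = 2 ^ nprime n - 16 * n"

definition players :: "nat \<Rightarrow> clause list \<Rightarrow> player set" where
  "players n cls =
     {DHat i | i. i \<in> {1..n}} \<union> {D i | i. i \<in> {1..n}} \<union> {DTil i | i. i \<in> {1..n}} \<union>
     {X i | i. i \<in> {1..n}} \<union> {XT i | i. i \<in> {1..n}} \<union> {XF i | i. i \<in> {1..n}} \<union>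
     {C j | j. j \<in> {1..length cls}} \<union>
     {F j | j. j \<in> {1..10 * n + pad n - length cls}}"

fun rank :: "nat \<Rightarrow> nat \<Rightarrow> player \<Rightarrow> nat" where
  "rank n m (DHat i) = 3 * (i - 1)"
| "rank n m (D i) = 3 * (i - 1) + 1"
| "rank n m (DTil i) = 3 * (i - 1) + 2"
| "rank n m (X i) = 3 * n + 3 * (i - 1)"
| "rank n m (XT i) = 3 * n + 3 * (i - 1) + 1"
| "rank n m (XF i) = 3 * n + 3 * (i - 1) + 2"
| "rank n m (C j) = 6 * n + (j - 1)"
| "rank n m (F j) = 6 * n + m + (j - 1)"

definition stronger :: "nat \<Rightarrow> clause list \<Rightarrow> player \<Rightarrow> player \<Rightarrow> bool" where
  "stronger n cls a b \<longleftrightarrow> rank n (length cls) a < rank n (length cls) b"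

definition lit_in_clause :: "clause list \<Rightarrow> nat \<Rightarrow> literal \<Rightarrow> bool" where
  "lit_in_clause cls j l \<longleftrightarrow> 1 \<le> j \<and> j \<le> length cls \<and>
     (fst (cls ! (j - 1)) = l \<or> snd (cls ! (j - 1)) = l)"

fun one_pair :: "clause list \<Rightarrow> player \<Rightarrow> player \<Rightarrow> bool" where
  "one_pair cls (X i) (XT j) = (i = j)"
| "one_pair cls (X i) (XF j) = (i = j)"
| "one_pair cls (C j) (XT i) = lit_in_clause cls j (i, True)"
| "one_pair cls (C j) (XF i) = lit_in_clause cls j (i, False)"
| "one_pair cls _ _ = False"

fun zero_pair :: "player \<Rightarrow> player \<Rightarrow> bool" where
  "zero_pair (D i) (DHat j) = (i = j)"
| "zero_pair (D i) (DTil j) = (i = j)"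
| "zero_pair (D i) (X j) = (i = j)"
| "zero_pair _ _ = False"

fun is_DX :: "player \<Rightarrow> bool" where
  "is_DX (D i) = True"
| "is_DX (X i) = True"
| "is_DX _ = False"

definition game_value :: "clause list \<Rightarrow> player \<Rightarrow> player \<Rightarrow> int" where
  "game_value cls a b =
     (if one_pair cls a b \<or> one_pair cls b a then 1
      else if zero_pair a b \<or> zero_pair b a then 0
      else if is_DX a \<or> is_DX b then -5
      else 0)"

definition T_value :: "nat \<Rightarrow> clause list \<Rightarrow> (player \<Rightarrow> nat) \<Rightarrow> int" where
  "T_value n cls \<sigma> =
     tournament_value (game_value cls) (stronger n cls)
       (inv_into (players n cls) \<sigma>) (nprime n)"

end

theory Submission
  imports Defs
begin

lemma winner_cong:
  "(\<And>q. k * 2^r < q \<Longrightarrow> q \<le> (k+1) * 2^r \<Longrightarrow> s q = s' q) \<Longrightarrow>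
   winner st s r k = winner st s' r k"
proof (induction r arbitrary: k)
  case 0
  then show ?case by simp
next
  case (Suc r)
  have a: "winner st s r (2*k) = winner st s' r (2*k)"
    by (rule Suc.IH) (auto intro!: Suc.prems simp: algebra_simps)
  have b: "winner st s r (2*k+1) = winner st s' r (2*k+1)"
    by (rule Suc.IH) (auto intro!: Suc.prems simp: algebra_simps)
  show ?case using a b by (simp add: Let_def)
qed

lemma tv_cong:
  assumes "\<And>q. 1 \<le> q \<Longrightarrow> q \<le> 2^N \<Longrightarrow> s q = s' q"
  shows "tournament_value v st s N = tournament_value v st s' N"
  unfolding tournament_value_def
proof (intro sum.cong refl)
  fix r and k :: nat assume r: "r \<in> {1..N}" and k: "k \<in> {..<2^(N-r)}"
  have kk: "k + 1 \<le> 2^(N-r)" using k by auto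
  have e: "(k+1) * 2^r \<le> 2^N"
  proof -
    have "(k+1) * 2^r \<le> 2^(N-r) * 2^r" using kk by (intro mult_right_mono) auto
    also have "\<dots> = 2^N" using r by (simp flip: power_add)
    finally show ?thesis .
  qed
  have e2: "(2::nat)^r = 2 * 2^(r-1)" using r by (cases r) auto
  show "v (winner st s (r - 1) (2 * k)) (winner st s (r - 1) (2 * k + 1)) =
        v (winner st s' (r - 1) (2 * k)) (winner st s' (r - 1) (2 * k + 1))"
  proof -
    have "winner st s (r - 1) (2 * k) = winner st s' (r - 1) (2 * k)"
      by (rule winner_cong, rule assms) (use e e2 in \<open>auto simp: algebra_simps\<close>)
    moreover have "winner st s (r - 1) (2 * k+1) = winner st s' (r - 1) (2 * k+1)"
      by (rule winner_cong, rule assms) (use e e2 in \<open>auto simp: algebra_simps\<close>)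
    ultimately show ?thesis by simp
  qed
qed

lemma winner_min:
  assumes st: "\<And>x y. st x y = (f x < (f y::nat))"
  shows "\<exists>q. k * 2^r \<le> q \<and> q < (k+1) * 2^r \<and> winner st (\<lambda>q. t (q - 1)) r k = t q
     \<and> (\<forall>q'. k * 2^r \<le> q' \<longrightarrow> q' < (k+1) * 2^r \<longrightarrow> f (t q) \<le> f (t q'))"
proof (induction r arbitrary: k)
  case 0
  then show ?case by (intro exI[of _ k]) (auto simp: le_Suc_eq less_Suc_eq)
next
  case (Suc r)
  obtain q1 where q1: "(2*k) * 2^r \<le> q1" "q1 < (2*k+1) * 2^r" "winner st (\<lambda>q. t (q - 1)) r (2*k) = t q1"
     "\<forall>q'. (2*k) * 2^r \<le> q' \<longrightarrow> q' < (2*k+1) * 2^r \<longrightarrow> f (t q1) \<le> f (t q')"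
    using Suc.IH[of "2*k"] by auto
  obtain q2 where q2: "(2*k+1) * 2^r \<le> q2" "q2 < (2*k+1+1) * 2^r" "winner st (\<lambda>q. t (q - 1)) r (2*k+1) = t q2"
     "\<forall>q'. (2*k+1) * 2^r \<le> q' \<longrightarrow> q' < (2*k+1+1) * 2^r \<longrightarrow> f (t q2) \<le> f (t q')"
    using Suc.IH[of "2*k+1"] by auto
  show ?case
  proof (cases "f (t q1) < f (t q2)")
    case True
    show ?thesis
    proof (rule exI[of _ q1], intro conjI allI impI)
      show "k * 2 ^ Suc r \<le> q1" using q1 by simp
      show "q1 < (k + 1) * 2 ^ Suc r" using q1 by (simp add: algebra_simps)
      show "winner st (\<lambda>q. t (q - 1)) (Suc r) k = t q1" using q1 q2 True by (simp add: st Let_def)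
      fix q' assume "k * 2 ^ Suc r \<le> q'" "q' < (k + 1) * 2 ^ Suc r"
      then show "f (t q1) \<le> f (t q')"
      proof (cases "q' < (2*k+1) * 2^r")
        case True
        then have "f (t q1) \<le> f (t q')" using q1(4) \<open>k * 2 ^ Suc r \<le> q'\<close> by (simp add: algebra_simps)
        then show ?thesis using True by linarith
      next
        case False
        then have "f (t q2) \<le> f (t q')" using q2(4) \<open>q' < (k + 1) * 2 ^ Suc r\<close> by (simp add: algebra_simps)
        then show ?thesis using True by linarith
      qed
    qed
  next
    case False
    show ?thesis
    proof (rule exI[of _ q2], intro conjI allI impI)
      show "k * 2 ^ Suc r \<le> q2" using q2 by (simp add: algebra_simps)
      show "q2 < (k + 1) * 2 ^ Suc r" using q2 by (simp add: algebra_simps)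
      show "winner st (\<lambda>q. t (q - 1)) (Suc r) k = t q2" using q1 q2 False by (simp add: st Let_def)
      fix q' assume "k * 2 ^ Suc r \<le> q'" "q' < (k + 1) * 2 ^ Suc r"
      then show "f (t q2) \<le> f (t q')"
      proof (cases "q' < (2*k+1) * 2^r")
        case True
        then have "f (t q1) \<le> f (t q')" using q1(4) \<open>k * 2 ^ Suc r \<le> q'\<close> by (simp add: algebra_simps)
        then show ?thesis using False by linarith
      next
        case False
        then have "f (t q2) \<le> f (t q')" using q2(4) \<open>q' < (k + 1) * 2 ^ Suc r\<close> by (simp add: algebra_simps)
        then show ?thesis using False by linarith
      qed
    qed
  qed
qed

lemma players_eq: "players n cls =
  DHat ` {1..n} \<union> D ` {1..n} \<union> DTil ` {1..n} \<union> X ` {1..n} \<union> XT ` {1..n} \<union> XF ` {1..n}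
  \<union> C ` {1..length cls} \<union> F ` {1..10 * n + pad n - length cls}"
  unfolding players_def by blast

lemma card_players: "card (players n cls) = 6*n + length cls + (10 * n + pad n - length cls)"
  unfolding players_eq
  by (subst card_Un_disjoint, auto simp: card_image inj_on_def)+

lemma nprime_ge: "16 * n \<le> 2 ^ nprime n"
  unfolding nprime_def
proof (rule LeastI)
  show "16 * n \<le> 2 ^ (n+4)"
    using less_exp[of n] by (simp add: power_add)
qed

locale red =
  fixes n :: nat and cls :: "clause list" and a :: "nat \<Rightarrow> bool"
  assumes inst: "max23sat_instance n cls"
begin

definition Sat where "Sat = {j. j < length cls \<and> clause_sat a (cls!j)}"
definition av where "av j = (if lit_true a (fst (cls!j)) then fst (fst (cls!j)) else fst (snd (cls!j)))"
definition fib where "fib i = {j \<in> Sat. av j = i}"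
definition Ls where "Ls i = sorted_list_of_set (fib i)"
definition FLp where "FLp i = (if a i then XF i else XT i)"
definition TLp where "TLp i = (if a i then XT i else XF i)"
definition slotC where "slotC i t = (if t < length (Ls i) then Some (C (Ls i ! t + 1)) else None)"
definition blk :: "nat \<Rightarrow> nat \<Rightarrow> player option" where
  "blk i w = (if w = 0 then Some (X (i+1)) else if w = 1 then Some (FLp (i+1)) else if w = 2 then Some (D (i+1))
    else if w = 3 then Some (DTil (i+1)) else if w = 4 then Some (DHat (i+1)) else if w = 8 then Some (TLp (i+1))
    else if w = 9 then slotC (i+1) 0 else if w = 10 then slotC (i+1) 1 else if w = 12 then slotC (i+1) 2
    else if w = 11 then Some (F (4 * i + 1)) else if w = 13 then Some (F (4 * i + 2))
    else if w = 14 then Some (F (4 * i + 3)) else if w = 15 then Some (F (4 * i + 4))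
    else None)"
definition stp where "stp p = (if p < 16 * n then blk (p div 16) (p mod 16) else None)"

lemma stp_at: "w < 16 \<Longrightarrow> i < n \<Longrightarrow> stp (16 * i + w) = blk i w"
  by (simp add: stp_def)

lemma av_var: "j < length cls \<Longrightarrow> av j \<in> clause_vars (cls ! j)"
  by (simp add: av_def clause_vars_def)

lemma vars_range: "j < length cls \<Longrightarrow> clause_vars (cls ! j) \<subseteq> {1..n}"
  using inst unfolding max23sat_instance_def by auto

lemma av_range: "j < length cls \<Longrightarrow> av j \<in> {1..n}"
  using av_var[of j] vars_range[of j] by (meson subsetD)

lemma fib_sub: "fib i \<subseteq> {j. j < length cls \<and> i \<in> clause_vars (cls ! j)}"
  using av_var by (auto simp: fib_def Sat_def)

lemma fib_empty: "i \<notin> {1..n} \<Longrightarrow> fib i = {}"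
  by (auto simp: fib_def Sat_def dest: av_range)

lemma fib_finite: "finite (fib i)"
  by (rule finite_subset[OF fib_sub]) auto

lemma card_fib: "card (fib i) \<le> 3"
proof (cases "i \<in> {1..n}")
  case True
  then have "card {j. j < length cls \<and> i \<in> clause_vars (cls ! j)} \<le> 3"
    using inst unfolding max23sat_instance_def by auto
  moreover have "card (fib i) \<le> card {j. j < length cls \<and> i \<in> clause_vars (cls ! j)}"
    by (rule card_mono[OF _ fib_sub]) auto
  ultimately show ?thesis by linarith
next
  case False
  then show ?thesis using fib_empty by simp
qed

lemma len_Ls: "length (Ls i) = card (fib i)"
  by (simp add: Ls_def fib_finite)

lemma Ls_mem: "t < length (Ls i) \<Longrightarrow> Ls i ! t \<in> fib i"
  using fib_finite by (metis Ls_def nth_mem set_sorted_list_of_set)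

lemma Ls_distinct: "distinct (Ls i)"
  by (simp add: Ls_def)

lemma fib_lit: "j \<in> fib i \<Longrightarrow> fst (cls ! j) = (i, a i) \<or> snd (cls ! j) = (i, a i)"
proof -
  assume j: "j \<in> fib i"
  then have sat: "clause_sat a (cls ! j)" and avj: "av j = i" by (auto simp: fib_def Sat_def)
  show ?thesis
  proof (cases "lit_true a (fst (cls ! j))")
    case True
    then have "fst (fst (cls ! j)) = i" using avj by (simp add: av_def)
    then show ?thesis using True by (auto simp: lit_true_def intro: prod_eqI)
  next
    case False
    then have "lit_true a (snd (cls ! j))" using sat by (simp add: clause_sat_def)
    moreover have "fst (snd (cls ! j)) = i" using avj False by (simp add: av_def)
    ultimately show ?thesis by (auto simp: lit_true_def intro: prod_eqI)
  qed
qed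

lemma fib_one_pair: "j \<in> fib i \<Longrightarrow> one_pair cls (C (j+1)) (TLp i)"
proof -
  assume j: "j \<in> fib i"
  then have jm: "j < length cls" by (simp add: fib_def Sat_def)
  have "fst (cls ! j) = (i, a i) \<or> snd (cls ! j) = (i, a i)" using fib_lit[OF j] .
  then show ?thesis using jm by (cases "a i") (auto simp: TLp_def lit_in_clause_def)
qed

lemma m_le: "length cls \<le> 3 * n"
proof -
  have sub: "{..<length cls} \<subseteq> (\<Union>i\<in>{1..n}. {j. j < length cls \<and> i \<in> clause_vars (cls ! j)})"
  proof
    fix j assume "j \<in> {..<length cls}"
    then have j: "j < length cls" by simp
    then have "av j \<in> {1..n}" "av j \<in> clause_vars (cls ! j)" using av_var av_range by auto
    then show "j \<in> (\<Union>i\<in>{1..n}. {j. j < length cls \<and> i \<in> clause_vars (cls ! j)})"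
      using j by blast
  qed
  have fin: "finite (\<Union>i\<in>{1..n}. {j. j < length cls \<and> i \<in> clause_vars (cls ! j)})"
    by (rule finite_UN_I) (simp, rule finite_subset[of _ "{..<length cls}"], auto)
  have "length cls \<le> card (\<Union>i\<in>{1..n}. {j. j < length cls \<and> i \<in> clause_vars (cls ! j)})"
    using card_mono[OF fin sub] by simp
  also have "\<dots> \<le> (\<Sum>i\<in>{1..n}. card {j. j < length cls \<and> i \<in> clause_vars (cls ! j)})"
    by (rule card_UN_le) simp
  also have "\<dots> \<le> (\<Sum>i\<in>{1..n}. 3)"
    by (rule sum_mono) (use inst in \<open>auto simp: max23sat_instance_def\<close>)
  finally show ?thesis by simp
qed

lemma card_P: "card (players n cls) = 2 ^ nprime n"
  using card_players[of n cls] m_le nprime_ge[of n] by (simp add: pad_def)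

lemma card_Sat: "card Sat = (\<Sum>i\<in>{1..n}. card (fib i))"
proof -
  have "Sat = (\<Union>i\<in>{1..n}. fib i)"
  proof
    show "Sat \<subseteq> (\<Union>i\<in>{1..n}. fib i)"
    proof
      fix j assume j: "j \<in> Sat"
      then have "av j \<in> {1..n}" using av_range by (auto simp: Sat_def)
      then show "j \<in> (\<Union>i\<in>{1..n}. fib i)" using j by (auto simp: fib_def)
    qed
  qed (auto simp: fib_def)
  then show ?thesis
    by (simp only:) (rule card_UN_disjoint, simp, simp add: fib_finite, auto simp: fib_def)
qed

end

lemma f4: "1 \<le> r \<Longrightarrow> r \<le> 4 \<Longrightarrow> 1 \<le> r' \<Longrightarrow> r' \<le> 4 \<Longrightarrow>
  (4 * (x::nat) + r = 4 * y + r') = (x = y \<and> r = r')"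
  by presburger

context red begin

lemma Ls_inj: "t < length (Ls i) \<Longrightarrow> t' < length (Ls i') \<Longrightarrow> Ls i ! t = Ls i' ! t' \<Longrightarrow> i = i' \<and> t = t'"
proof -
  assume t: "t < length (Ls i)" and t': "t' < length (Ls i')" and e: "Ls i ! t = Ls i' ! t'"
  have a1: "av (Ls i ! t) = i" using Ls_mem[OF t] unfolding fib_def by blast
  have a2: "av (Ls i' ! t') = i'" using Ls_mem[OF t'] unfolding fib_def by blast
  have ii: "i = i'" using a1 a2 e by simp
  have e': "Ls i' ! t = Ls i' ! t'" using e ii by simp
  have t'': "t < length (Ls i')" using t ii by simp
  have "t = t'" using nth_eq_iff_index_eq[OF Ls_distinct t'' t'] e' by simp
  then show ?thesis using ii by simp
qed

lemma blk_X: "blk i w = Some (X j) \<Longrightarrow> w = 0 \<and> j = i+1"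
  unfolding blk_def slotC_def FLp_def TLp_def by (simp split: if_splits)
lemma blk_D: "blk i w = Some (D j) \<Longrightarrow> w = 2 \<and> j = i+1"
  unfolding blk_def slotC_def FLp_def TLp_def by (simp split: if_splits)
lemma blk_DTil: "blk i w = Some (DTil j) \<Longrightarrow> w = 3 \<and> j = i+1"
  unfolding blk_def slotC_def FLp_def TLp_def by (simp split: if_splits)
lemma blk_DHat: "blk i w = Some (DHat j) \<Longrightarrow> w = 4 \<and> j = i+1"
  unfolding blk_def slotC_def FLp_def TLp_def by (simp split: if_splits)
lemma blk_XT: "blk i w = Some (XT j) \<Longrightarrow> j = i+1 \<and> (w = 1 \<and> \<not> a j \<or> w = 8 \<and> a j)"
  unfolding blk_def slotC_def FLp_def TLp_def by (simp split: if_splits)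
lemma blk_XF: "blk i w = Some (XF j) \<Longrightarrow> j = i+1 \<and> (w = 1 \<and> a j \<or> w = 8 \<and> \<not> a j)"
  unfolding blk_def slotC_def FLp_def TLp_def by (simp split: if_splits)
lemma blk_F: "blk i w = Some (F j) \<Longrightarrow> (w = 11 \<and> j = 4*i+1) \<or> (w = 13 \<and> j = 4*i+2)
   \<or> (w = 14 \<and> j = 4*i+3) \<or> (w = 15 \<and> j = 4*i+4)"
  unfolding blk_def slotC_def FLp_def TLp_def by (simp split: if_splits)
lemma blk_C: "blk i w = Some (C j) \<Longrightarrow> (\<exists>tt. tt < length (Ls (i+1)) \<and> j = Ls (i+1) ! tt + 1 \<and>
    (tt = 0 \<and> w = 9 \<or> tt = 1 \<and> w = 10 \<or> tt = 2 \<and> w = 12))"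
  unfolding blk_def slotC_def FLp_def TLp_def by (simp split: if_splits; blast)

lemma blk_inj: "blk i w = Some y \<Longrightarrow> blk i' w' = Some y \<Longrightarrow> i = i' \<and> w = w'"
proof (cases y)
  case (C j)
  assume h1: "blk i w = Some y" and h2: "blk i' w' = Some y"
  obtain tt where tt: "tt < length (Ls (i+1))" "j = Ls (i+1) ! tt + 1"
    "tt = 0 \<and> w = 9 \<or> tt = 1 \<and> w = 10 \<or> tt = 2 \<and> w = 12"
    using blk_C h1 C by blast
  obtain tt' where tt': "tt' < length (Ls (i'+1))" "j = Ls (i'+1) ! tt' + 1"
    "tt' = 0 \<and> w' = 9 \<or> tt' = 1 \<and> w' = 10 \<or> tt' = 2 \<and> w' = 12"
    using blk_C h2 C by blast
  have "i + 1 = i' + 1 \<and> tt = tt'" using Ls_inj[OF tt(1) tt'(1)] tt(2) tt'(2) by simp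
  then show ?thesis using tt(3) tt'(3) by auto
next
  case (F j)
  assume h1: "blk i w = Some y" and h2: "blk i' w' = Some y"
  show ?thesis using blk_F[OF h1[unfolded F]] blk_F[OF h2[unfolded F]] by (elim disjE; presburger)
qed (auto dest!: blk_X blk_D blk_DTil blk_DHat blk_XT blk_XF)

end

fun low :: "player \<Rightarrow> bool" where
  "low (C j) = True" | "low (F j) = True" | "low _ = False"

context red begin

definition SP where "SP = {p. stp p \<noteq> None}"
definition st where "st p = the (stp p)"

lemma SP_lt: "p \<in> SP \<Longrightarrow> p < 16 * n"
  by (simp add: SP_def stp_def split: if_splits)

lemma stp_inj: "stp p = Some y \<Longrightarrow> stp p' = Some y \<Longrightarrow> p = p'"
proof -
  assume h1: "stp p = Some y" and h2: "stp p' = Some y"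
  have "blk (p div 16) (p mod 16) = Some y" using h1 by (simp add: stp_def split: if_splits)
  moreover have "blk (p' div 16) (p' mod 16) = Some y" using h2 by (simp add: stp_def split: if_splits)
  ultimately have "p div 16 = p' div 16 \<and> p mod 16 = p' mod 16" using blk_inj by blast
  then show "p = p'" by (metis div_mult_mod_eq)
qed

lemma inj_st: "inj_on st SP"
  unfolding inj_on_def SP_def st_def using stp_inj by fastforce

lemma st_Some: "p \<in> SP \<Longrightarrow> stp p = Some (st p)"
  by (auto simp: SP_def st_def)

lemma st_in_P: "p \<in> SP \<Longrightarrow> st p \<in> players n cls"
proof -
  assume p: "p \<in> SP"
  define i where "i = p div 16"
  define w where "w = p mod 16"
  have i: "i < n" using SP_lt[OF p] by (simp add: i_def less_mult_imp_div_less mult.commute)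
  have b: "blk i w = Some (st p)" using st_Some[OF p] SP_lt[OF p] by (simp add: stp_def i_def w_def)
  have ml: "length cls \<le> 3 * n" by (rule m_le)
  show ?thesis
  proof (cases "st p")
    case (C j)
    then obtain tt where tt: "tt < length (Ls (i+1))" "j = Ls (i+1) ! tt + 1" using blk_C[OF b[unfolded C]] by blast
    have "Ls (i+1) ! tt < length cls" using Ls_mem[OF tt(1)] by (simp add: fib_def Sat_def)
    then show ?thesis using C tt by (simp add: players_eq)
  next
    case (F j)
    then have "1 \<le> j \<and> j \<le> 4 * i + 4" using blk_F[OF b[unfolded F]] by fastforce
    moreover have "j \<le> 10 * n + pad n - length cls" using calculation i ml by linarith
    ultimately have "j \<in> {1..10 * n + pad n - length cls}" by simp
    then show ?thesis using F by (simp add: players_eq)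
  qed (use b i in \<open>auto simp: players_eq dest!: blk_X blk_D blk_DTil blk_DHat blk_XT blk_XF\<close>)
qed

lemma pos_in: "j \<in> {1..n} \<Longrightarrow> w < 16 \<Longrightarrow> blk (j-1) w = Some y \<Longrightarrow> y \<in> st ` SP"
proof -
  assume j: "j \<in> {1..n}" and w: "w < 16" and b: "blk (j-1) w = Some y"
  have "j - 1 < n" using j by auto
  then have "stp (16 * (j-1) + w) = Some y" using stp_at[OF w, of "j-1"] b by simp
  then show ?thesis unfolding SP_def st_def by force
qed

lemma hi_in: "y \<in> players n cls \<Longrightarrow> \<not> low y \<Longrightarrow> y \<in> st ` SP"
proof -
  assume y: "y \<in> players n cls" and nl: "\<not> low y"
  show ?thesis
  proof (cases y)
    case (DHat j) then show ?thesis using y by (intro pos_in[of j 4]) (auto simp: players_eq blk_def)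
  next
    case (D j) then show ?thesis using y by (intro pos_in[of j 2]) (auto simp: players_eq blk_def)
  next
    case (DTil j) then show ?thesis using y by (intro pos_in[of j 3]) (auto simp: players_eq blk_def)
  next
    case (X j) then show ?thesis using y by (intro pos_in[of j 0]) (auto simp: players_eq blk_def)
  next
    case (XT j)
    show ?thesis
    proof (cases "a j")
      case True then show ?thesis using y XT by (intro pos_in[of j 8]) (auto simp: players_eq blk_def TLp_def)
    next
      case False then show ?thesis using y XT by (intro pos_in[of j 1]) (auto simp: players_eq blk_def FLp_def)
    qed
  next
    case (XF j)
    show ?thesis
    proof (cases "a j")
      case True then show ?thesis using y XF by (intro pos_in[of j 1]) (auto simp: players_eq blk_def FLp_def)
    next
      case False then show ?thesis using y XF by (intro pos_in[of j 8]) (auto simp: players_eq blk_def TLp_def)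
    qed
  qed (use nl in auto)
qed

lemma SP_sub: "SP \<subseteq> {..<2 ^ nprime n}"
  using SP_lt nprime_ge[of n] by fastforce

lemma finSP: "finite SP"
  using SP_sub finite_subset by blast

lemma ex_h: "\<exists>h. bij_betw h ({..<2 ^ nprime n} - SP) (players n cls - st ` SP)"
proof (rule finite_same_card_bij)
  show "finite ({..<2 ^ nprime n} - SP)" by simp
  show "finite (players n cls - st ` SP)" by (simp add: players_eq)
  have "card ({..<2 ^ nprime n} - SP) = 2 ^ nprime n - card SP"
    using SP_sub finSP by (simp add: card_Diff_subset)
  moreover have "card (players n cls - st ` SP) = 2 ^ nprime n - card SP"
  proof -
    have "st ` SP \<subseteq> players n cls" using st_in_P by blast
    then have "card (players n cls - st ` SP) = card (players n cls) - card (st ` SP)"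
      using finSP by (simp add: card_Diff_subset)
    then show ?thesis using card_P card_image[OF inj_st] by simp
  qed
  ultimately show "card ({..<2 ^ nprime n} - SP) = card (players n cls - st ` SP)" by simp
qed

definition hh where "hh = (SOME h. bij_betw h ({..<2 ^ nprime n} - SP) (players n cls - st ` SP))"

lemma hh: "bij_betw hh ({..<2 ^ nprime n} - SP) (players n cls - st ` SP)"
  unfolding hh_def using ex_h by (rule someI_ex)

definition tp where "tp p = (case stp p of Some y \<Rightarrow> y | None \<Rightarrow> hh p)"

lemma tp_SP: "p \<in> SP \<Longrightarrow> tp p = st p"
  by (simp add: tp_def st_Some)

lemma tp_nSP: "p \<notin> SP \<Longrightarrow> tp p = hh p"
  by (simp add: tp_def SP_def)

lemma tp_low: "p < 2 ^ nprime n \<Longrightarrow> p \<notin> SP \<Longrightarrow> low (tp p)"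
proof -
  assume p: "p < 2 ^ nprime n" "p \<notin> SP"
  then have "hh p \<in> players n cls - st ` SP" using hh by (auto simp: bij_betw_def)
  then show ?thesis using hi_in[of "hh p"] tp_nSP[OF p(2)] by auto
qed

lemma bij_tt: "bij_betw tp {..<2 ^ nprime n} (players n cls)"
proof -
  have "inj_on tp {..<2 ^ nprime n}"
  proof (rule inj_onI)
    fix p p' assume p: "p \<in> {..<2 ^ nprime n}" and p': "p' \<in> {..<2 ^ nprime n}" and e: "tp p = tp p'"
    show "p = p'"
    proof (cases "p \<in> SP")
      case True
      note pT = True
      show ?thesis
      proof (cases "p' \<in> SP")
        case True
        then show ?thesis using pT e tp_SP inj_st by (metis inj_onD)
      next
        case False
        then have "hh p' \<in> players n cls - st ` SP" using hh p' by (auto simp: bij_betw_def)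
        then show ?thesis using e tp_SP[OF pT] tp_nSP[OF False] pT by (metis DiffD2 image_eqI)
      qed
    next
      case False
      note pF = False
      show ?thesis
      proof (cases "p' \<in> SP")
        case True
        have "hh p \<in> players n cls - st ` SP" using hh p pF by (auto simp: bij_betw_def)
        then show ?thesis using e tp_SP[OF True] tp_nSP[OF pF] True by (metis DiffD2 image_eqI)
      next
        case False
        then show ?thesis using pF e tp_nSP hh p p' by (metis DiffI bij_betw_def inj_onD)
      qed
    qed
  qed
  moreover have "tp ` {..<2 ^ nprime n} = players n cls"
  proof
    show "tp ` {..<2 ^ nprime n} \<subseteq> players n cls"
    proof
      fix y assume "y \<in> tp ` {..<2 ^ nprime n}"
      then obtain p where p: "p < 2 ^ nprime n" "y = tp p" by auto
      show "y \<in> players n cls"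
      proof (cases "p \<in> SP")
        case True then show ?thesis using p st_in_P tp_SP by simp
      next
        case False then show ?thesis using p hh tp_nSP[OF False] by (auto simp: bij_betw_def)
      qed
    qed
    show "players n cls \<subseteq> tp ` {..<2 ^ nprime n}"
    proof
      fix y assume y: "y \<in> players n cls"
      show "y \<in> tp ` {..<2 ^ nprime n}"
      proof (cases "y \<in> st ` SP")
        case True
        then obtain p where "p \<in> SP" "y = st p" by auto
        then show ?thesis using tp_SP SP_sub by force
      next
        case False
        then have "y \<in> hh ` ({..<2 ^ nprime n} - SP)" using hh y by (simp add: bij_betw_def)
        then obtain p where "p \<in> {..<2 ^ nprime n} - SP" "y = hh p" by auto
        then show ?thesis using tp_nSP by force
      qed
    qed
  qed
  ultimately show ?thesis by (simp add: bij_betw_def)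
qed

end

lemma gv_ok: "(\<not> is_DX A \<and> \<not> is_DX B) \<or> zero_pair A B \<or> zero_pair B A \<or> one_pair cls A B \<Longrightarrow>
  0 \<le> game_value cls A B"
  unfolding game_value_def by auto

lemma low_nDX: "low y \<Longrightarrow> \<not> is_DX y"
  by (cases y) auto

context red begin

definition W where "W r k = winner (stronger n cls) (\<lambda>q. tp (q - 1)) r k"

lemma W_min: "\<exists>q. k * 2^r \<le> q \<and> q < (k+1) * 2^r \<and> W r k = tp q
     \<and> (\<forall>q'. k * 2^r \<le> q' \<longrightarrow> q' < (k+1) * 2^r \<longrightarrow> rank n (length cls) (tp q) \<le> rank n (length cls) (tp q'))"
  unfolding W_def by (rule winner_min) (simp add: stronger_def)

lemma W_is:
  assumes "k * 2^r \<le> q0" "q0 < (k+1) * 2^r"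
    and "\<And>q. k * 2^r \<le> q \<Longrightarrow> q < (k+1) * 2^r \<Longrightarrow> q \<noteq> q0 \<Longrightarrow>
          rank n (length cls) (tp q0) < rank n (length cls) (tp q)"
  shows "W r k = tp q0"
proof -
  obtain q where q: "k * 2^r \<le> q" "q < (k+1) * 2^r" "W r k = tp q"
    "\<forall>q'. k * 2^r \<le> q' \<longrightarrow> q' < (k+1) * 2^r \<longrightarrow> rank n (length cls) (tp q) \<le> rank n (length cls) (tp q')"
    using W_min by blast
  show ?thesis
  proof (cases "q = q0")
    case False
    then have "rank n (length cls) (tp q0) < rank n (length cls) (tp q)" using assms(3) q by blast
    moreover have "rank n (length cls) (tp q) \<le> rank n (length cls) (tp q0)" using q(4) assms by blast
    ultimately show ?thesis by simp
  qed (use q in simp)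
qed

lemma W0: "W 0 k = tp k"
  by (simp add: W_def)

lemma low_R: "low y \<Longrightarrow> 6 * n \<le> rank n (length cls) y"
  by (cases y) auto

lemma tp_blk: "i < n \<Longrightarrow> w < 16 \<Longrightarrow> blk i w = Some y \<Longrightarrow> tp (16 * i + w) = y"
  by (simp add: tp_def stp_at)

lemma lt_MM: "p < 16 * n \<Longrightarrow> p < 2 ^ nprime n"
  using nprime_ge[of n] by linarith

lemma tp_low16: "i < n \<Longrightarrow> w < 16 \<Longrightarrow> w \<in> {5,6,7,9,10,11,12,13,14,15} \<Longrightarrow> low (tp (16 * i + w))"
proof -
  assume i: "i < n" and w: "w < 16" and ww: "w \<in> {5,6,7,9,10,11,12,13,14,15}"
  show ?thesis
  proof (cases "blk i w")
    case None
    then have "16 * i + w \<notin> SP" using stp_at[OF w i] by (simp add: SP_def)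
    moreover have "16 * i + w < 2 ^ nprime n" using i w by (intro lt_MM) linarith
    ultimately show ?thesis using tp_low by blast
  next
    case (Some y)
    then have "tp (16 * i + w) = y" using tp_blk i w by blast
    moreover have "low y" using Some ww unfolding blk_def slotC_def
      by (auto split: if_splits)
    ultimately show ?thesis by simp
  qed
qed

lemma tp_high: "16 * n \<le> p \<Longrightarrow> p < 2 ^ nprime n \<Longrightarrow> low (tp p)"
  using SP_lt tp_low by fastforce

lemma K1: "p < 2 ^ nprime n \<Longrightarrow> is_DX (tp p) \<Longrightarrow> p < 16 * n \<and>
   ((p mod 16 = 0 \<and> tp p = X (p div 16 + 1)) \<or> (p mod 16 = 2 \<and> tp p = D (p div 16 + 1)))"
proof -
  assume p: "p < 2 ^ nprime n" and dx: "is_DX (tp p)"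
  have sp: "p \<in> SP" using tp_low[OF p] low_nDX dx by blast
  have b: "blk (p div 16) (p mod 16) = Some (tp p)" and pl: "p < 16 * n"
    using st_Some[OF sp] tp_SP[OF sp] SP_lt[OF sp] by (auto simp: stp_def)
  show ?thesis
  proof (cases "tp p")
    case (X j) then show ?thesis using blk_X b pl by auto
  next
    case (D j) then show ?thesis using blk_D b pl by auto
  qed (use dx in auto)
qed

end

lemma ar8: "q < 8 * A \<Longrightarrow> q = 16 * i + e \<Longrightarrow> e < 4 \<Longrightarrow> 16 * i + 4 < 8 * (A::nat)"
proof -
  assume "q < 8 * A" "q = 16 * i + e" "e < 4"
  then have "2 * i < A" by linarith
  then have "2 * i + 1 \<le> A" by simp
  then show ?thesis by linarith
qed

lemma ar1: "4*k \<le> q \<Longrightarrow> q < 4*k+2 \<Longrightarrow> q mod 16 = 0 \<or> q mod 16 = 2 \<Longrightarrow>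
  q mod 16 = 0 \<and> q = 16*(q div 16) \<and> 4*k = 16*(q div 16)" for k q :: nat
proof -
  assume a: "4*k \<le> q" "q < 4*k+2" "q mod 16 = 0 \<or> q mod 16 = 2"
  have q: "q = 16*(q div 16) + q mod 16" by simp
  show ?thesis
  proof (cases "q mod 16 = 0")
    case True
    then have e: "q = 16*(q div 16)" using q by linarith
    moreover have "4*(q div 16) \<le> k" using a(2) e by linarith
    ultimately have "4*k = 16*(q div 16)" using a(1) by linarith
    then show ?thesis using True e by simp
  next
    case False
    then have "q mod 16 = 2" using a(3) by simp
    then have e: "q = 16*(q div 16) + 2" using q by linarith
    moreover have "4*(q div 16) < k" using a(2) e by linarith
    ultimately have False using a(1) by linarith
    then show ?thesis by simp
  qed
qed
lemma ar2: "4*k+2 \<le> q \<Longrightarrow> q < 4*k+4 \<Longrightarrow> q mod 16 = 0 \<or> q mod 16 = 2 \<Longrightarrow>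
  q mod 16 = 2 \<and> q = 16*(q div 16) + 2 \<and> 4*k = 16*(q div 16)" for k q :: nat
proof -
  assume a: "4*k+2 \<le> q" "q < 4*k+4" "q mod 16 = 0 \<or> q mod 16 = 2"
  have q: "q = 16*(q div 16) + q mod 16" by simp
  show ?thesis
  proof (cases "q mod 16 = 0")
    case True
    then have e: "q = 16*(q div 16)" using q by linarith
    moreover have "k < 4*(q div 16)" using a(1) e by linarith
    ultimately have False using a(2) by linarith
    then show ?thesis by simp
  next
    case False
    then have m: "q mod 16 = 2" using a(3) by simp
    then have e: "q = 16*(q div 16) + 2" using q by linarith
    moreover have "4*(q div 16) \<le> k" using a(2) e by linarith
    ultimately have "4*k = 16*(q div 16)" using a(1) by linarith
    then show ?thesis using m e by simp
  qed
qed
lemma ar3: "8*k \<le> q \<Longrightarrow> q < 8*k+4 \<Longrightarrow> q mod 16 = 0 \<or> q mod 16 = 2 \<Longrightarrow>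
  8*k = 16*(q div 16)" for k q :: nat
proof -
  assume a: "8*k \<le> q" "q < 8*k+4" "q mod 16 = 0 \<or> q mod 16 = 2"
  have q: "q = 16*(q div 16) + q mod 16" by simp
  have e: "q mod 16 \<le> 2" using a(3) by auto
  have "2*(q div 16) < k + 1" using a(2) q by linarith
  moreover have "k < 2*(q div 16) + 1" using a(1) q e by linarith
  ultimately show ?thesis by linarith
qed
lemma ar4: "8*k+4 \<le> q \<Longrightarrow> q < 8*k+8 \<Longrightarrow> q mod 16 = 0 \<or> q mod 16 = 2 \<Longrightarrow> False" for k q :: nat
proof -
  assume a: "8*k+4 \<le> q" "q < 8*k+8" "q mod 16 = 0 \<or> q mod 16 = 2"
  have q: "q = 16*(q div 16) + q mod 16" by simp
  have e: "q mod 16 \<le> 2" using a(3) by auto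
  have "k < 2*(q div 16)" using a(1) q e by linarith
  then have "k + 1 \<le> 2*(q div 16)" by simp
  then show False using a(2) q by linarith
qed

context red begin

lemma tpX: "i < n \<Longrightarrow> tp (16 * i) = X (i+1)"
  using tp_blk[of i 0 "X (i+1)"] by (simp add: blk_def)
lemma tpFL: "i < n \<Longrightarrow> tp (16 * i + 1) = FLp (i+1)"
  using tp_blk[of i 1] by (simp add: blk_def)
lemma tpD: "i < n \<Longrightarrow> tp (16 * i + 2) = D (i+1)"
  using tp_blk[of i 2] by (simp add: blk_def)
lemma tpDTil: "i < n \<Longrightarrow> tp (16 * i + 3) = DTil (i+1)"
  using tp_blk[of i 3] by (simp add: blk_def)
lemma tpDHat: "i < n \<Longrightarrow> tp (16 * i + 4) = DHat (i+1)"
  using tp_blk[of i 4] by (simp add: blk_def)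
lemma tpTL: "i < n \<Longrightarrow> tp (16 * i + 8) = TLp (i+1)"
  using tp_blk[of i 8] by (simp add: blk_def)
lemma tpF: "i < n \<Longrightarrow> w \<in> {11,13,14,15} \<Longrightarrow> \<exists>j. tp (16 * i + w) = F j"
  using tp_blk[of i w] by (auto simp: blk_def)
lemma tpC: "i < n \<Longrightarrow> tq < length (Ls (i+1)) \<Longrightarrow> (tq = 0 \<and> w = 9 \<or> tq = 1 \<and> w = 10 \<or> tq = 2 \<and> w = 12)
   \<Longrightarrow> tp (16 * i + w) = C (Ls (i+1) ! tq + 1)"
  using tp_blk[of i w] by (auto simp: blk_def slotC_def)

lemma R_TL: "i < n \<Longrightarrow> rank n (length cls) (TLp (i+1)) < 6 * n"
  by (simp add: TLp_def)
lemma R_FL: "rank n (length cls) (X j) < rank n (length cls) (FLp j)"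
  by (simp add: FLp_def)

lemma Wlev3:
  assumes l: "3 \<le> l" and kb: "(k+1) * 2^l \<le> 2 ^ nprime n"
  shows "\<not> is_DX (W l k)"
proof
  assume dx: "is_DX (W l k)"
  obtain q where q: "k * 2^l \<le> q" "q < (k+1) * 2^l" "W l k = tp q"
    "\<forall>q'. k * 2^l \<le> q' \<longrightarrow> q' < (k+1) * 2^l \<longrightarrow> rank n (length cls) (tp q) \<le> rank n (length cls) (tp q')"
    using W_min by blast
  have qM: "q < 2 ^ nprime n" using q(2) kb by linarith
  from K1[OF qM] dx q(3) have k1: "q < 16 * n"
    "(q mod 16 = 0 \<and> tp q = X (q div 16 + 1)) \<or> (q mod 16 = 2 \<and> tp q = D (q div 16 + 1))" by auto
  define i where "i = q div 16"
  have i: "i < n" using k1(1) by (simp add: i_def less_mult_imp_div_less mult.commute)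
  define d where "d = (2::nat)^(l-3)"
  have "(2::nat)^l = 2^(3 + (l-3))" using l by simp
  also have "\<dots> = 8 * d" unfolding d_def power_add by simp
  finally have l8: "(2::nat)^l = 8 * d" .
  define K where "K = k * d"
  have qe: "q = 16 * i + q mod 16" by (simp add: i_def)
  have m8: "q mod 16 < 4" using k1(2) by auto
  have a1: "8 * K \<le> q" using q(1) l8 by (simp add: K_def algebra_simps)
  have a2: "q < 8 * K + 8 * d" using q(2) l8 by (simp add: K_def algebra_simps)
  have kl: "k * 2^l = 8 * K" using l8 by (simp add: K_def)
  have b1: "k * 2^l \<le> 16 * i + 4" using a1 qe m8 unfolding kl by linarith
  have e8: "(k+1) * 2^l = 8 * (K + d)" using l8 by (simp add: K_def algebra_simps)
  have b2: "16 * i + 4 < (k+1) * 2^l" unfolding e8 using a2 qe m8 by (intro ar8) auto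
  have "rank n (length cls) (tp q) \<le> rank n (length cls) (tp (16 * i + 4))" using q(4) b1 b2 by blast
  moreover have "tp (16 * i + 4) = DHat (i+1)" using tpDHat[OF i] .
  ultimately show False using k1(2) i unfolding i_def by auto
qed


lemma g_nonneg:
  assumes r: "1 \<le> r" and kb: "(k+1) * 2^r \<le> 2 ^ nprime n"
  shows "0 \<le> game_value cls (W (r-1) (2*k)) (W (r-1) (2*k+1))"
proof -
  obtain l where rl: "r = l + 1" using r by (metis add.commute le_Suc_ex)
  have bb: "(2*k+1+1) * 2^l \<le> 2 ^ nprime n" using kb unfolding rl by (simp add: algebra_simps)
  have ba: "(2*k+1) * 2^l \<le> 2 ^ nprime n" using bb by (simp add: algebra_simps)
  let ?R = "rank n (length cls)"
  consider "l = 0" | "l = 1" | "l = 2" | "3 \<le> l" by linarith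
  then show ?thesis
  proof cases
    case 1
    have AB: "W (r-1) (2*k) = tp (2*k)" "W (r-1) (2*k+1) = tp (2*k+1)" using rl 1 by (simp_all add: W0)
    have M1: "2*k+1 < 2 ^ nprime n" using bb 1 by simp
    have M0: "2*k < 2 ^ nprime n" using M1 by simp
    show ?thesis unfolding AB
    proof (rule gv_ok)
      show "(\<not> is_DX (tp (2*k)) \<and> \<not> is_DX (tp (2*k+1))) \<or> zero_pair (tp (2*k)) (tp (2*k+1))
        \<or> zero_pair (tp (2*k+1)) (tp (2*k)) \<or> one_pair cls (tp (2*k)) (tp (2*k+1))"
      proof (cases "is_DX (tp (2*k))")
        case True
        from K1[OF M0 True] have k1: "2*k < 16*n"
          "2*k mod 16 = 0 \<and> tp (2*k) = X (2*k div 16 + 1) \<or> 2*k mod 16 = 2 \<and> tp (2*k) = D (2*k div 16 + 1)" by auto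
        define i where "i = 2*k div 16"
        have i: "i < n" using k1(1) by (simp add: i_def less_mult_imp_div_less mult.commute)
        from k1(2) show ?thesis
        proof
          assume h: "2*k mod 16 = 0 \<and> tp (2*k) = X (2*k div 16 + 1)"
          have "2*k+1 = 16*i+1" using conjunct1[OF h] div_mult_mod_eq[of "2*k" 16] unfolding i_def by linarith
          then have "tp (2*k+1) = FLp (i+1)" using tpFL[OF i] by metis
          then show ?thesis using h unfolding i_def[symmetric] by (simp add: FLp_def)
        next
          assume h: "2*k mod 16 = 2 \<and> tp (2*k) = D (2*k div 16 + 1)"
          have "2*k+1 = 16*i+3" using conjunct1[OF h] div_mult_mod_eq[of "2*k" 16] unfolding i_def by linarith
          then have "tp (2*k+1) = DTil (i+1)" using tpDTil[OF i] by metis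
          then show ?thesis using h unfolding i_def[symmetric] by simp
        qed
      next
        case False
        have "\<not> is_DX (tp (2*k+1))"
        proof
          assume "is_DX (tp (2*k+1))"
          from K1[OF M1 this] have "(2*k+1) mod 16 = 0 \<or> (2*k+1) mod 16 = 2" by auto
          moreover have "(2*k+1) mod 16 mod 2 = (2*k+1) mod 2" by (rule mod_mod_cancel) simp
          ultimately show False by auto
        qed
        then show ?thesis using False by simp
      qed
    qed
  next
    case 2
    have l1: "r - 1 = 1" using rl 2 by simp
    show ?thesis unfolding l1
    proof (rule gv_ok)
      let ?A = "W 1 (2*k)" and ?B = "W 1 (2*k+1)"
      show "(\<not> is_DX ?A \<and> \<not> is_DX ?B) \<or> zero_pair ?A ?B \<or> zero_pair ?B ?A \<or> one_pair cls ?A ?B"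
      proof (cases "is_DX ?A")
        case True
        obtain q where q: "2*k * 2^1 \<le> q" "q < (2*k+1) * 2^1" "?A = tp q" using W_min by blast
        have qM: "q < 2 ^ nprime n" using q(2) ba 2 by auto
        from K1[OF qM] True q(3) have k1: "q < 16 * n"
          "(q mod 16 = 0 \<and> tp q = X (q div 16 + 1)) \<or> (q mod 16 = 2 \<and> tp q = D (q div 16 + 1))" by auto
        define i where "i = q div 16"
        have i: "i < n" using k1(1) by (simp add: i_def less_mult_imp_div_less mult.commute)
        have a: "q mod 16 = 0 \<and> q = 16*i \<and> 4*k = 16*i" unfolding i_def
          by (rule ar1) (use q(1,2) k1(2) in auto)
        have qi: "q = 16 * i \<and> 4 * k = 16 * i \<and> tp q = X (i+1)" using k1(2) a unfolding i_def by auto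
        have "?B = tp (16*i+2)"
        proof (rule W_is)
          show "(2*k+1) * 2^1 \<le> 16*i+2" using qi by simp
          show "16*i+2 < (2*k+1+1) * 2^1" using qi by simp
          fix q' assume "(2*k+1) * 2^1 \<le> q'" "q' < (2*k+1+1) * 2^1" "q' \<noteq> 16*i+2"
          then have "q' = 16*i+3" using qi by simp
          then show "?R (tp (16*i+2)) < ?R (tp q')" using tpD[OF i] tpDTil[OF i] by simp
        qed
        then have "?B = D (i+1)" using tpD[OF i] by simp
        then show ?thesis using qi q(3) tpX[OF i] by simp
      next
        case False
        show ?thesis
        proof (cases "is_DX ?B")
          case True
          obtain q where q: "(2*k+1) * 2^1 \<le> q" "q < (2*k+1+1) * 2^1" "?B = tp q" using W_min by blast
          have qM: "q < 2 ^ nprime n" using q(2) bb 2 by auto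
          from K1[OF qM] True q(3) have k1: "q < 16 * n"
            "(q mod 16 = 0 \<and> tp q = X (q div 16 + 1)) \<or> (q mod 16 = 2 \<and> tp q = D (q div 16 + 1))" by auto
          define i where "i = q div 16"
          have i: "i < n" using k1(1) by (simp add: i_def less_mult_imp_div_less mult.commute)
          have a: "q mod 16 = 2 \<and> q = 16*i + 2 \<and> 4*k = 16*i" unfolding i_def
            by (rule ar2) (use q(1,2) k1(2) in auto)
          have qi: "q = 16 * i + 2 \<and> 4 * k = 16 * i \<and> tp q = D (i+1)" using k1(2) a unfolding i_def by auto
          have "?A = tp (16*i)"
          proof (rule W_is)
            show "(2*k) * 2^1 \<le> 16*i" using qi by simp
            show "16*i < (2*k+1) * 2^1" using qi by simp
            fix q' assume "(2*k) * 2^1 \<le> q'" "q' < (2*k+1) * 2^1" "q' \<noteq> 16*i"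
            then have "q' = 16*i+1" using qi by simp
            then show "?R (tp (16*i)) < ?R (tp q')" using tpX[OF i] tpFL[OF i] by (simp add: FLp_def)
          qed
          then have "?A = X (i+1)" using tpX[OF i] by simp
          moreover have "?B = D (i+1)" using qi q(3) by metis
          ultimately show ?thesis by simp
        next
          case False
          then show ?thesis using \<open>\<not> is_DX ?A\<close> by simp
        qed
      qed
    qed
  next
    case 3
    have l1: "r - 1 = 2" using rl 3 by simp
    show ?thesis unfolding l1
    proof (rule gv_ok)
      let ?A = "W 2 (2*k)" and ?B = "W 2 (2*k+1)"
      show "(\<not> is_DX ?A \<and> \<not> is_DX ?B) \<or> zero_pair ?A ?B \<or> zero_pair ?B ?A \<or> one_pair cls ?A ?B"
      proof (cases "is_DX ?A")
        case True
        obtain q where q: "2*k * 2^2 \<le> q" "q < (2*k+1) * 2^2" "?A = tp q"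
          "\<forall>q'. 2*k * 2^2 \<le> q' \<longrightarrow> q' < (2*k+1) * 2^2 \<longrightarrow> ?R (tp q) \<le> ?R (tp q')" using W_min by blast
        have qM: "q < 2 ^ nprime n" using q(2) ba 3 by auto
        from K1[OF qM] True q(3) have k1: "q < 16 * n"
          "(q mod 16 = 0 \<and> tp q = X (q div 16 + 1)) \<or> (q mod 16 = 2 \<and> tp q = D (q div 16 + 1))" by auto
        define i where "i = q div 16"
        have i: "i < n" using k1(1) by (simp add: i_def less_mult_imp_div_less mult.commute)
        have k8: "8 * k = 16 * i" unfolding i_def
          by (rule ar3) (use q(1,2) k1(2) in auto)
        have "?R (tp q) \<le> ?R (tp (16*i+2))" using q(4) k8 by simp
        then have qD: "tp q = D (i+1)" using k1(2) tpD[OF i] i unfolding i_def[symmetric] by auto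
        have "?B = tp (16*i+4)"
        proof (rule W_is)
          show "(2*k+1) * 2^2 \<le> 16*i+4" using k8 by simp
          show "16*i+4 < (2*k+1+1) * 2^2" using k8 by simp
          fix q' assume "(2*k+1) * 2^2 \<le> q'" "q' < (2*k+1+1) * 2^2" "q' \<noteq> 16*i+4"
          then have "q' = 16*i+5 \<or> q' = 16*i+6 \<or> q' = 16*i+7" using k8 by (simp; linarith)
          then have "low (tp q')" using tp_low16[OF i] by auto
          then have "6 * n \<le> ?R (tp q')" by (rule low_R)
          then show "?R (tp (16*i+4)) < ?R (tp q')" using tpDHat[OF i] i by simp
        qed
        then have "?B = DHat (i+1)" using tpDHat[OF i] by simp
        then show ?thesis using qD q(3) by simp
      next
        case False
        have "\<not> is_DX ?B"
        proof
          assume dB: "is_DX ?B"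
          obtain q where q: "(2*k+1) * 2^2 \<le> q" "q < (2*k+1+1) * 2^2" "?B = tp q" using W_min by blast
          have qM: "q < 2 ^ nprime n" using q(2) bb 3 by auto
          from K1[OF qM] dB q(3) have "q mod 16 = 0 \<or> q mod 16 = 2" by auto
          then show False using q(1,2) ar4[of k q] by simp
        qed
        then show ?thesis using False by simp
      qed
    qed
  next
    case 4
    have "\<not> is_DX (W l (2*k))" by (rule Wlev3[OF 4]) (use ba in simp)
    moreover have "\<not> is_DX (W l (2*k+1))" by (rule Wlev3[OF 4]) (use bb in simp)
    ultimately show ?thesis using rl by (intro gv_ok) simp
  qed
qed

end

lemma gv_one: "one_pair cls A B \<or> one_pair cls B A \<Longrightarrow> game_value cls A B = 1"
  unfolding game_value_def by auto

context red begin

definition gg where "gg r k = game_value cls (W (r-1) (2*k)) (W (r-1) (2*k+1))"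

lemma R_CF: "x < length cls \<Longrightarrow> rank n (length cls) (C (x+1)) < rank n (length cls) (F j)"
  by simp

lemma Ls_lt: "tq < length (Ls i) \<Longrightarrow> Ls i ! tq < length cls"
  using Ls_mem by (auto simp: fib_def Sat_def)

lemma gg1a: "i < n \<Longrightarrow> gg 1 (8*i) = 1"
proof -
  assume i: "i < n"
  have "W 0 (2*(8*i)) = X (i+1)" using tpX[OF i] by (simp add: W0)
  moreover have "W 0 (2*(8*i)+1) = FLp (i+1)" using tpFL[OF i] by (simp add: W0)
  ultimately show ?thesis unfolding gg_def by (intro gv_one) (simp add: FLp_def)
qed

lemma gg1b: "i < n \<Longrightarrow> 0 < length (Ls (i+1)) \<Longrightarrow> gg 1 (8*i+4) = 1"
proof -
  assume i: "i < n" and l: "0 < length (Ls (i+1))"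
  have "W 0 (2*(8*i+4)) = TLp (i+1)" using tpTL[OF i] by (simp add: W0)
  moreover have "W 0 (2*(8*i+4)+1) = C (Ls (i+1) ! 0 + 1)" using tpC[OF i l, of 9] by (simp add: W0 algebra_simps)
  ultimately show ?thesis unfolding gg_def using fib_one_pair[OF Ls_mem[OF l]] by (intro gv_one) simp
qed

lemma gg2: "i < n \<Longrightarrow> 1 < length (Ls (i+1)) \<Longrightarrow> gg 2 (4*i+2) = 1"
proof -
  assume i: "i < n" and l: "1 < length (Ls (i+1))"
  have "W 1 (2*(4*i+2)) = tp (16*i+8)"
  proof (rule W_is)
    show "2*(4*i+2) * 2^1 \<le> 16*i+8" by simp
    show "16*i+8 < (2*(4*i+2)+1) * 2^1" by simp
    fix q assume "2*(4*i+2) * 2^1 \<le> q" "q < (2*(4*i+2)+1) * 2^1" "q \<noteq> 16*i+8"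
    then have "q = 16*i+9" by simp
    then have "low (tp q)" using tp_low16[OF i, of 9] by simp
    then have "6 * n \<le> rank n (length cls) (tp q)" by (rule low_R)
    then show "rank n (length cls) (tp (16*i+8)) < rank n (length cls) (tp q)"
      using tpTL[OF i] R_TL[OF i] by simp
  qed
  then have A: "W 1 (2*(4*i+2)) = TLp (i+1)" using tpTL[OF i] by simp
  have "W 1 (2*(4*i+2)+1) = tp (16*i+10)"
  proof (rule W_is)
    show "(2*(4*i+2)+1) * 2^1 \<le> 16*i+10" by simp
    show "16*i+10 < (2*(4*i+2)+1+1) * 2^1" by simp
    fix q assume "(2*(4*i+2)+1) * 2^1 \<le> q" "q < (2*(4*i+2)+1+1) * 2^1" "q \<noteq> 16*i+10"
    then have "q = 16*i+11" by simp
    then obtain j where "tp q = F j" using tpF[OF i, of 11] by auto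
    then show "rank n (length cls) (tp (16*i+10)) < rank n (length cls) (tp q)"
      using tpC[OF i l, of 10] Ls_lt[OF l] by simp
  qed
  then have B: "W 1 (2*(4*i+2)+1) = C (Ls (i+1) ! 1 + 1)" using tpC[OF i l, of 10] by simp
  show ?thesis unfolding gg_def using A B fib_one_pair[OF Ls_mem[OF l]] by (intro gv_one) simp
qed

lemma gg3: "i < n \<Longrightarrow> 2 < length (Ls (i+1)) \<Longrightarrow> gg 3 (2*i+1) = 1"
proof -
  assume i: "i < n" and l: "2 < length (Ls (i+1))"
  have "W 2 (2*(2*i+1)) = tp (16*i+8)"
  proof (rule W_is)
    show "2*(2*i+1) * 2^2 \<le> 16*i+8" by simp
    show "16*i+8 < (2*(2*i+1)+1) * 2^2" by simp
    fix q assume "2*(2*i+1) * 2^2 \<le> q" "q < (2*(2*i+1)+1) * 2^2" "q \<noteq> 16*i+8"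
    then have "q = 16*i+9 \<or> q = 16*i+10 \<or> q = 16*i+11" by (simp; linarith)
    then have "low (tp q)" using tp_low16[OF i] by auto
    then have "6 * n \<le> rank n (length cls) (tp q)" by (rule low_R)
    then show "rank n (length cls) (tp (16*i+8)) < rank n (length cls) (tp q)"
      using tpTL[OF i] R_TL[OF i] by simp
  qed
  then have A: "W 2 (2*(2*i+1)) = TLp (i+1)" using tpTL[OF i] by simp
  have "W 2 (2*(2*i+1)+1) = tp (16*i+12)"
  proof (rule W_is)
    show "(2*(2*i+1)+1) * 2^2 \<le> 16*i+12" by simp
    show "16*i+12 < (2*(2*i+1)+1+1) * 2^2" by simp
    fix q assume "(2*(2*i+1)+1) * 2^2 \<le> q" "q < (2*(2*i+1)+1+1) * 2^2" "q \<noteq> 16*i+12"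
    then have "q = 16*i+13 \<or> q = 16*i+14 \<or> q = 16*i+15" by (simp; linarith)
    then obtain j where "tp q = F j" using tpF[OF i] by blast
    then show "rank n (length cls) (tp (16*i+12)) < rank n (length cls) (tp q)"
      using tpC[OF i l, of 12] Ls_lt[OF l] by simp
  qed
  then have B: "W 2 (2*(2*i+1)+1) = C (Ls (i+1) ! 2 + 1)" using tpC[OF i l, of 12] by simp
  show ?thesis unfolding gg_def using A B fib_one_pair[OF Ls_mem[OF l]] by (intro gv_one) simp
qed


lemma gg_nonneg: "1 \<le> r \<Longrightarrow> (k+1) * 2^r \<le> 2 ^ nprime n \<Longrightarrow> 0 \<le> gg r k"
  unfolding gg_def by (rule g_nonneg)

lemma MM16: "16 * n \<le> 2 ^ nprime n" by (rule nprime_ge)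

lemma per_var: "i < n \<Longrightarrow> 1 + int (card (fib (i+1))) \<le> gg 1 (8*i) + gg 1 (8*i+4) + gg 2 (4*i+2) + gg 3 (2*i+1)"
proof -
  assume i: "i < n"
  have b: "16 * i + 16 \<le> 2 ^ nprime n" using i MM16 by linarith
  have n1: "0 \<le> gg 1 (8*i+4)" by (rule gg_nonneg) (use b in auto)
  have n2: "0 \<le> gg 2 (4*i+2)" by (rule gg_nonneg) (use b in auto)
  have n3: "0 \<le> gg 3 (2*i+1)" by (rule gg_nonneg) (use b in auto)
  have c3: "card (fib (i+1)) \<le> 3" by (rule card_fib)
  have L: "length (Ls (i+1)) = card (fib (i+1))" by (rule len_Ls)
  have a: "gg 1 (8*i) = 1" by (rule gg1a[OF i])
  have b1: "0 < card (fib (i+1)) \<Longrightarrow> gg 1 (8*i+4) = 1" using gg1b[OF i] L by (metis)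
  have b2: "1 < card (fib (i+1)) \<Longrightarrow> gg 2 (4*i+2) = 1" using gg2[OF i] L by (metis)
  have b3: "2 < card (fib (i+1)) \<Longrightarrow> gg 3 (2*i+1) = 1" using gg3[OF i] L by (metis)
  have "card (fib (i+1)) = 0 \<or> card (fib (i+1)) = 1 \<or> card (fib (i+1)) = 2 \<or> card (fib (i+1)) = 3"
    using c3 by arith
  then show ?thesis
  proof (elim disjE)
    assume h: "card (fib (i+1)) = 0"
    show ?thesis using a n1 n2 n3 unfolding h by linarith
  next
    assume h: "card (fib (i+1)) = 1"
    show ?thesis using a b1 n1 n2 n3 unfolding h by linarith
  next
    assume h: "card (fib (i+1)) = 2"
    show ?thesis using a b1 b2 n1 n2 n3 unfolding h by linarith
  next
    assume h: "card (fib (i+1)) = 3"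
    show ?thesis using a b1 b2 b3 n1 n2 n3 unfolding h by linarith
  qed
qed

lemma pow_split: "r \<le> N \<Longrightarrow> (2::nat) ^ N = 2 ^ r * 2 ^ (N - r)"
  by (simp flip: power_add)

lemma round_sum:
  assumes r: "1 \<le> r" "r \<le> nprime n" and cn: "c * n \<le> 2 ^ (nprime n - r)"
  shows "(\<Sum>i<n. \<Sum>k\<in>{i*c..<i*c+c}. gg r k) \<le> (\<Sum>k<2 ^ (nprime n - r). gg r k)"
proof -
  have "(\<Sum>i<n. \<Sum>k\<in>{i*c..<i*c+c}. gg r k) = (\<Sum>k<n*c. gg r k)" by (rule sum.nat_group)
  also have "\<dots> \<le> (\<Sum>k<2 ^ (nprime n - r). gg r k)"
  proof (rule sum_mono2)
    show "{..<n*c} \<subseteq> {..<2 ^ (nprime n - r)}" using cn by (auto simp: mult.commute)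
    fix k assume "k \<in> {..<2 ^ (nprime n - r)} - {..<n*c}"
    then have "k + 1 \<le> 2 ^ (nprime n - r)" by auto
    then have "(k+1) * 2^r \<le> 2 ^ (nprime n - r) * 2^r" by (rule mult_right_mono) simp
    also have "\<dots> = 2 ^ nprime n" using pow_split[OF r(2)] by simp
    finally show "0 \<le> gg r k" using r(1) by (intro gg_nonneg) auto
  qed simp
  finally show ?thesis .
qed

lemma sel:
  assumes "1 \<le> r" "S \<subseteq> {lo..<hi}" "hi * 2^r \<le> 2 ^ nprime n"
  shows "(\<Sum>k\<in>S. gg r k) \<le> (\<Sum>k\<in>{lo..<hi}. gg r k)"
proof (rule sum_mono2)
  fix k assume "k \<in> {lo..<hi} - S"
  then have "(k+1) * 2^r \<le> hi * 2^r" by (intro mult_right_mono) auto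
  then show "0 \<le> gg r k" using assms by (intro gg_nonneg) auto
qed (use assms in auto)

lemma total_nonneg:
  "0 \<le> (\<Sum>r\<in>{1..nprime n}. \<Sum>k<2 ^ (nprime n - r). gg r k)"
proof (intro sum_nonneg)
  fix r k :: nat assume r: "r \<in> {1..nprime n}" and k: "k \<in> {..<2 ^ (nprime n - r)}"
  then have "k + 1 \<le> 2 ^ (nprime n - r)" by auto
  then have "(k+1) * 2^r \<le> 2 ^ (nprime n - r) * 2^r" by (rule mult_right_mono) simp
  also have "\<dots> = 2 ^ nprime n" using pow_split[of r "nprime n"] r by simp
  finally show "0 \<le> gg r k" using r by (intro gg_nonneg) auto
qed

lemma total_bound:
  "int (n + card Sat) \<le> (\<Sum>r\<in>{1..nprime n}. \<Sum>k<2 ^ (nprime n - r). gg r k)"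
proof (cases "n = 0")
  case True
  then show ?thesis using total_nonneg card_Sat by simp
next
  case False
  let ?N = "nprime n"
  let ?G = "\<lambda>r. (\<Sum>k<2 ^ (?N - r). gg r k)"
  have big: "16 \<le> (2::nat) ^ ?N" using MM16 False by linarith
  have N4: "4 \<le> ?N"
  proof (rule ccontr)
    assume "\<not> 4 \<le> ?N"
    then have "(2::nat) ^ ?N \<le> 2 ^ 3" by (intro power_increasing) auto
    then show False using big by simp
  qed
  have Gnn: "0 \<le> ?G r" if "r \<in> {1..?N}" for r
  proof (intro sum_nonneg)
    fix k :: nat assume k: "k \<in> {..<2 ^ (?N - r)}"
    then have "k + 1 \<le> 2 ^ (?N - r)" by auto
    then have "(k+1) * 2^r \<le> 2 ^ (?N - r) * 2^r" by (rule mult_right_mono) simp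
    also have "\<dots> = 2 ^ ?N" using pow_split[of r ?N] that by simp
    finally show "0 \<le> gg r k" using that by (intro gg_nonneg) auto
  qed
  have "?G 1 + ?G 2 + ?G 3 = (\<Sum>r\<in>{1,2,3}. ?G r)" by simp
  also have "\<dots> \<le> (\<Sum>r\<in>{1..?N}. ?G r)"
    by (rule sum_mono2) (use N4 Gnn in auto)
  finally have T: "?G 1 + ?G 2 + ?G 3 \<le> (\<Sum>r\<in>{1..?N}. ?G r)" .
  have e1: "(2::nat) ^ ?N = 2 * 2 ^ (?N - 1)" using pow_split[of 1 ?N] N4 by simp
  have e2: "(2::nat) ^ ?N = 4 * 2 ^ (?N - 2)" using pow_split[of 2 ?N] N4 by simp
  have e3: "(2::nat) ^ ?N = 8 * 2 ^ (?N - 3)" using pow_split[of 3 ?N] N4 by simp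
  have G1: "(\<Sum>i<n. gg 1 (8*i) + gg 1 (8*i+4)) \<le> ?G 1"
  proof -
    have "(\<Sum>i<n. gg 1 (8*i) + gg 1 (8*i+4)) \<le> (\<Sum>i<n. \<Sum>k\<in>{i*8..<i*8+8}. gg 1 k)"
    proof (rule sum_mono)
      fix i assume i: "i \<in> {..<n}"
      have "gg 1 (8*i) + gg 1 (8*i+4) = (\<Sum>k\<in>{8*i, 8*i+4}. gg 1 k)" by simp
      also have "\<dots> \<le> (\<Sum>k\<in>{i*8..<i*8+8}. gg 1 k)"
        by (rule sel) (use i MM16 in auto)
      finally show "gg 1 (8*i) + gg 1 (8*i+4) \<le> (\<Sum>k\<in>{i*8..<i*8+8}. gg 1 k)" .
    qed
    also have "\<dots> \<le> ?G 1" by (rule round_sum) (use N4 MM16 e1 in auto)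
    finally show ?thesis .
  qed
  have G2: "(\<Sum>i<n. gg 2 (4*i+2)) \<le> ?G 2"
  proof -
    have "(\<Sum>i<n. gg 2 (4*i+2)) \<le> (\<Sum>i<n. \<Sum>k\<in>{i*4..<i*4+4}. gg 2 k)"
    proof (rule sum_mono)
      fix i assume i: "i \<in> {..<n}"
      have "gg 2 (4*i+2) = (\<Sum>k\<in>{4*i+2}. gg 2 k)" by simp
      also have "\<dots> \<le> (\<Sum>k\<in>{i*4..<i*4+4}. gg 2 k)"
        by (rule sel) (use i MM16 in auto)
      finally show "gg 2 (4*i+2) \<le> (\<Sum>k\<in>{i*4..<i*4+4}. gg 2 k)" .
    qed
    also have "\<dots> \<le> ?G 2" by (rule round_sum) (use N4 MM16 e2 in auto)
    finally show ?thesis .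
  qed
  have G3: "(\<Sum>i<n. gg 3 (2*i+1)) \<le> ?G 3"
  proof -
    have "(\<Sum>i<n. gg 3 (2*i+1)) \<le> (\<Sum>i<n. \<Sum>k\<in>{i*2..<i*2+2}. gg 3 k)"
    proof (rule sum_mono)
      fix i assume i: "i \<in> {..<n}"
      have "gg 3 (2*i+1) = (\<Sum>k\<in>{2*i+1}. gg 3 k)" by simp
      also have "\<dots> \<le> (\<Sum>k\<in>{i*2..<i*2+2}. gg 3 k)"
        by (rule sel) (use i MM16 in auto)
      finally show "gg 3 (2*i+1) \<le> (\<Sum>k\<in>{i*2..<i*2+2}. gg 3 k)" .
    qed
    also have "\<dots> \<le> ?G 3" by (rule round_sum) (use N4 MM16 e3 in auto)
    finally show ?thesis .
  qed
  have "int (n + card Sat) = (\<Sum>i<n. 1 + int (card (fib (i+1))))"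
  proof -
    have "card Sat = (\<Sum>i<n. card (fib (i+1)))"
      using card_Sat sum.atLeast1_atMost_eq[where g = "\<lambda>i. card (fib i)" and n = n] by simp
    then show ?thesis by (simp add: sum.distrib)
  qed
  also have "\<dots> \<le> (\<Sum>i<n. gg 1 (8*i) + gg 1 (8*i+4) + gg 2 (4*i+2) + gg 3 (2*i+1))"
    by (rule sum_mono) (use per_var in auto)
  also have "\<dots> = (\<Sum>i<n. gg 1 (8*i) + gg 1 (8*i+4)) + (\<Sum>i<n. gg 2 (4*i+2)) + (\<Sum>i<n. gg 3 (2*i+1))"
    by (simp add: sum.distrib)
  also have "\<dots> \<le> ?G 1 + ?G 2 + ?G 3" using G1 G2 G3 by linarith
  also have "\<dots> \<le> (\<Sum>r\<in>{1..?N}. ?G r)" by (rule T)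
  finally show ?thesis .
qed

end

theorem lemma3:
  fixes n k :: nat and cls :: "clause list" and a :: "nat \<Rightarrow> bool"
  assumes "max23sat_instance n cls"
    and "k \<le> num_sat cls a"
  shows "\<exists>\<sigma>. bij_betw \<sigma> (players n cls) {1..2 ^ nprime n} \<and>
             int (k + n) \<le> T_value n cls \<sigma>"
proof -
  interpret red n cls a using assms(1) by unfold_locales
  define s1 where "s1 = (\<lambda>q. tp (q - 1))"
  have sh: "bij_betw (\<lambda>q::nat. q - 1) {1..2 ^ nprime n} {..<2 ^ nprime n}"
    by (rule bij_betw_byWitness[where f' = Suc]) (auto simp: image_iff)
  have bs1: "bij_betw s1 {1..2 ^ nprime n} (players n cls)"
    unfolding s1_def using bij_betw_trans[OF sh bij_tt] by (simp add: comp_def)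
  define \<sigma> where "\<sigma> = inv_into {1..2 ^ nprime n} s1"
  have b\<sigma>: "bij_betw \<sigma> (players n cls) {1..2 ^ nprime n}"
    unfolding \<sigma>_def by (rule bij_betw_inv_into[OF bs1])
  have "T_value n cls \<sigma> = tournament_value (game_value cls) (stronger n cls) s1 (nprime n)"
    unfolding T_value_def \<sigma>_def
    by (rule tv_cong) (rule inv_into_inv_into_eq[OF bs1], simp)
  also have "\<dots> = (\<Sum>r\<in>{1..nprime n}. \<Sum>k<2 ^ (nprime n - r). gg r k)"
    unfolding tournament_value_def gg_def W_def s1_def by simp
  finally have T: "T_value n cls \<sigma> = (\<Sum>r\<in>{1..nprime n}. \<Sum>k<2 ^ (nprime n - r). gg r k)" .
  have "num_sat cls a = card Sat" by (simp add: num_sat_def Sat_def)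
  then have "int (k + n) \<le> int (n + card Sat)" using assms(2) by simp
  also have "\<dots> \<le> T_value n cls \<sigma>" unfolding T by (rule total_bound)
  finally show ?thesis using b\<sigma> by blast
qed

end
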